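(* There is an absolute constant $\delta>0$ such that the following holds. For $A\ge1$ and $y\ge1$ define \[ f_A(y)=\delta\min\Big\{\frac{\big(\operatorname{Log}_2 y-\frac{\operatorname{Log} A}{\log 4-1}\big)^2}{\operatorname{Log} A},\ \operatorname{Log} A+\operatorname{Log}_2 y\Big\}, \] and for $x>1$ let $\mathcal{S}^A_{<x}$ be the set of $n\in\mathcal{S}_{<x}$ such that \[ \tau(n_{<y})\le A\,e^{-f_A(y)}\operatorname{Log} y\quad\text{for all } y\in[1,x]. \] Then for all $A\ge1$ and $x>1$, \[ \sum_{n\in\mathcal{S}_{<x}\setminus\mathcal{S}^A_{<x}}\frac1n\ll\frac{\operatorname{Log} x}{A}, \] with an absolute implied constant.
   Context: $\operatorname{Log} x=\max\{1,\log x\}$, $\operatorname{Log}_2 x=\operatorname{Log}(\operatorname{Log} x)$. $\tau(n)$ is the number of divisors of $n$. For $x\ge1$, $\mathcal{S}_{<x}$ is the set of square-free natural numbers all of whose prime factors are $<x$ (including $1$). For $n\in\mathcal{S}_{<x}$ and $1\le y\le x$, $n_{<y}$ denotes the product of the prime factors of $n$ that are $<y$ (so $n=n_{<y}n_{\ge y}$ with $n_{\ge y}$ having all prime factors in $[y,x)$). *)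

theory Defs
  imports "HOL-Analysis.Analysis" "HOL-Computational_Algebra.Squarefree"
begin

definition Logm :: "real \<Rightarrow> real" where
  "Logm x = max 1 (ln x)"

definition Log2 :: "real \<Rightarrow> real" where
  "Log2 x = Logm (Logm x)"

definition tau :: "nat \<Rightarrow> nat" where
  "tau n = card {d. d dvd n}"

definition S_lt :: "real \<Rightarrow> nat set" where
  "S_lt x = {n. n > 0 \<and> squarefree n \<and> (\<forall>p\<in>prime_factors n. real p < x)}"

definition part_lt :: "nat \<Rightarrow> real \<Rightarrow> nat" where
  "part_lt n y = (\<Prod>p\<in>{p\<in>prime_factors n. real p < y}. p)"

definition fA :: "real \<Rightarrow> real \<Rightarrow> real \<Rightarrow> real" where
  "fA \<delta> A y = \<delta> * min ((Log2 y - Logm A / (ln 4 - 1))^2 / Logm A) (Logm A + Log2 y)"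

definition SA_lt :: "real \<Rightarrow> real \<Rightarrow> real \<Rightarrow> nat set" where
  "SA_lt \<delta> A x = {n \<in> S_lt x. \<forall>y. 1 \<le> y \<and> y \<le> x \<longrightarrow>
      real (tau (part_lt n y)) \<le> A * exp (- fA \<delta> A y) * Logm y}"

end

theory Submission
  imports Defs
begin

definition primes_le :: "nat \<Rightarrow> nat set" where "primes_le n = {p. prime p \<and> p \<le> n}"

lemma finite_primes_le [simp]: "finite (primes_le n)"
  unfolding primes_le_def by (rule finite_subset[of _ "{..n}"]) auto

lemma prod_primes_dvd:
  fixes N :: nat
  assumes "finite P" "\<forall>p\<in>P. prime p" "\<forall>p\<in>P. p dvd N"
  shows "\<Prod>P dvd N"
  using assms
proof (induction P rule: finite_induct)
  case empty then show ?case by simp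
next
  case (insert p F)
  have cop: "coprime p (\<Prod>F)"
    by (rule prod_coprime_right) (use insert in \<open>auto intro!: primes_coprime\<close>)
  have "p * \<Prod>F dvd N"
    by (rule divides_mult) (use insert cop in auto)
  then show ?case using insert by simp
qed

lemma binom_bound: "(2*m+1 choose m) \<le> 4^m"
proof -
  have "(\<Sum>k\<in>{m, m+1}. (2*m+1) choose k) \<le> (\<Sum>k\<le>2*m+1. (2*m+1) choose k)"
    by (rule sum_mono2) auto
  also have "\<dots> = 2^(2*m+1)" by (rule choose_row_sum)
  finally have "(2*m+1 choose m) + (2*m+1 choose (m+1)) \<le> 2^(2*m+1)" by simp
  moreover have "(2*m+1 choose (m+1)) = (2*m+1 choose m)"
    using binomial_symmetric[of "m+1" "2*m+1"] by simp
  ultimately have "2 * (2*m+1 choose m) \<le> 2 * 4^m"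
    by (simp add: power_mult power_add)
  then show ?thesis by simp
qed

lemma mid_primes_dvd:
  assumes "prime p" "m+1 < p" "p \<le> 2*m+1"
  shows "p dvd (2*m+1 choose m)"
proof -
  have eq: "fact m * fact (m+1) * (2*m+1 choose m) = (fact (2*m+1) :: nat)"
    using binomial_fact_lemma[of m "2*m+1"] by (simp add: algebra_simps)
  have "p dvd (fact (2*m+1) :: nat)" using prime_dvd_fact_iff[OF assms(1), of "2*m+1"] assms(3) by blast
  then have "p dvd fact m * fact (m+1) * (2*m+1 choose m)" by (simp only: eq)
  moreover have "\<not> p dvd (fact m :: nat)"
    using prime_dvd_fact_iff[OF assms(1), of m] assms(2) by linarith
  moreover have "\<not> p dvd (fact (m+1) :: nat)"
    using prime_dvd_fact_iff[OF assms(1), of "m+1"] assms(2) by linarith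
  ultimately show ?thesis using assms(1) by (simp add: prime_dvd_mult_iff)
qed

lemma primorial_bound: "\<Prod>(primes_le n) \<le> 4^n"
proof (induction n rule: less_induct)
  case (less n)
  show ?case
  proof (cases "n \<le> 2")
    case True
    have sub: "primes_le n \<subseteq> {2}" 
    proof
      fix p assume "p \<in> primes_le n"
      then have "prime p" "p \<le> n" unfolding primes_le_def by auto
      then have "2 \<le> p" "p \<le> 2" using True prime_ge_2_nat by auto
      then show "p \<in> {2}" by simp
    qed
    show ?thesis
    proof (cases "n = 0")
      case True
      then have "primes_le n = {}" using sub unfolding primes_le_def by auto
      then show ?thesis by simp
    next
      case False
      have "\<Prod>(primes_le n) \<le> \<Prod>{2::nat}"
        using sub by (cases "primes_le n = {}") (auto simp: subset_singleton_iff)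
      also have "\<dots> \<le> 4^1" by simp
      also have "\<dots> \<le> 4^n" by (rule power_increasing) (use False in auto)
      finally show ?thesis .
    qed
  next
    case False
    show ?thesis
    proof (cases "even n")
      case True
      then have "\<not> prime n" using False prime_odd_nat by auto
      then have "primes_le n = primes_le (n-1)"
        unfolding primes_le_def using False by (auto simp: le_less)
      then have "\<Prod>(primes_le n) \<le> 4^(n-1)" using less[of "n-1"] False by simp
      also have "\<dots> \<le> 4^n" by (rule power_increasing) auto
      finally show ?thesis .
    next
      case False': False
      then obtain m where n: "n = 2*m+1" by (metis oddE)
      with False have m1: "m \<ge> 1" by simp
      let ?Q = "{p. prime p \<and> m+1 < p \<and> p \<le> 2*m+1}"
      have split: "primes_le n = primes_le (m+1) \<union> ?Q" and disj: "primes_le (m+1) \<inter> ?Q = {}"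
        unfolding primes_le_def n by auto
      have finQ: "finite ?Q" by (rule finite_subset[of _ "{..2*m+1}"]) auto
      have eq: "\<Prod>(primes_le n) = \<Prod>(primes_le (m+1)) * \<Prod>?Q"
        unfolding split by (rule prod.union_disjoint) (use finQ disj in auto)
      have posC: "0 < (2*m+1 choose m)" by (simp add: zero_less_binomial_iff)
      have "\<Prod>?Q dvd (2*m+1 choose m)"
        by (rule prod_primes_dvd) (use finQ mid_primes_dvd in auto)
      then have "\<Prod>?Q \<le> (2*m+1 choose m)" using posC by (rule dvd_imp_le)
      also have "\<dots> \<le> 4^m" by (rule binom_bound)
      finally have Q: "\<Prod>?Q \<le> 4^m" .
      have A: "\<Prod>(primes_le (m+1)) \<le> 4^(m+1)" using less[of "m+1"] n m1 by simp
      have "\<Prod>(primes_le n) \<le> 4^(m+1) * 4^m" unfolding eq by (rule mult_le_mono[OF A Q])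
      also have "\<dots> = 4^n" by (simp add: n power_add[symmetric])
      finally show ?thesis .
    qed
  qed
qed

lemma theta_bound: "(\<Sum>p\<in>primes_le n. ln (real p)) \<le> real n * ln 4"
proof -
  have pos: "\<And>p. p \<in> primes_le n \<Longrightarrow> real p > 0" unfolding primes_le_def using prime_gt_0_nat by auto
  have "(\<Sum>p\<in>primes_le n. ln (real p)) = ln (\<Prod>p\<in>primes_le n. real p)"
    by (subst ln_prod) (use pos in auto)
  also have "(\<Prod>p\<in>primes_le n. real p) = real (\<Prod>(primes_le n))" by simp
  also have "ln \<dots> \<le> ln (4^n)"
  proof (subst ln_le_cancel_iff)
    show "0 < real (\<Prod>(primes_le n))"
      using prime_gt_0_nat unfolding primes_le_def by (auto intro!: prod_pos)
    show "(0::real) < 4^n" by simp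
    have "real (\<Prod>(primes_le n)) \<le> real (4^n)" using primorial_bound[of n] by (simp only: of_nat_le_iff)
    then show "real (\<Prod>(primes_le n)) \<le> 4^n" by simp
  qed
  also have "\<dots> = real n * ln 4" by (simp add: ln_realpow)
  finally show ?thesis .
qed

lemma pow_div_dvd_fact: "p > 0 \<Longrightarrow> p^(n div p) dvd (fact n :: nat)"
proof (induction n)
  case 0 then show ?case by simp
next
  case (Suc n)
  show ?case
  proof (cases "Suc n mod p = 0")
    case True
    then have "p dvd Suc n" by auto
    then have "p * p^(n div p) dvd Suc n * fact n" using Suc by (intro mult_dvd_mono) auto
    then show ?thesis using True by (simp add: div_Suc)
  next
    case False
    then have "p^(Suc n div p) = p^(n div p)" by (simp add: div_Suc)
    then show ?thesis using Suc by (simp add: dvd_mult)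
  qed
qed

lemma prod_pow_dvd:
  fixes N :: nat
  assumes "finite P" "\<forall>p\<in>P. prime p" "\<forall>p\<in>P. p^(e p) dvd N"
  shows "(\<Prod>p\<in>P. p^(e p)) dvd N"
  using assms
proof (induction P rule: finite_induct)
  case empty then show ?case by simp
next
  case (insert p F)
  have cop: "coprime (p^(e p)) (\<Prod>q\<in>F. q^(e q))"
    by (rule prod_coprime_right) (use insert in \<open>auto intro!: primes_coprime\<close>)
  have "p^(e p) * (\<Prod>q\<in>F. q^(e q)) dvd N"
    by (rule divides_mult) (use insert cop in auto)
  then show ?case using insert by simp
qed

lemma legendre_sum: "(\<Sum>p\<in>primes_le n. real (n div p) * ln (real p)) \<le> real n * ln (real n)"
proof (cases "n = 0")
  case True then show ?thesis unfolding primes_le_def using prime_gt_0_nat by auto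
next
  case False
  have pp: "\<forall>p\<in>primes_le n. prime p" unfolding primes_le_def by auto
  have dv: "(\<Prod>p\<in>primes_le n. p^(n div p)) dvd fact n"
    by (rule prod_pow_dvd) (use pp pow_div_dvd_fact prime_gt_0_nat in auto)
  have Npos: "0 < (\<Prod>p\<in>primes_le n. p^(n div p))" using pp prime_gt_0_nat by (auto intro!: prod_pos)
  have "(\<Prod>p\<in>primes_le n. p^(n div p)) \<le> fact n" using dv by (rule dvd_imp_le) simp
  also have "(fact n :: nat) \<le> n^n" using fact_le_power[of n, where 'a=nat] by simp
  finally have le: "(\<Prod>p\<in>primes_le n. p^(n div p)) \<le> n^n" .
  have "(\<Sum>p\<in>primes_le n. real (n div p) * ln (real p)) = (\<Sum>p\<in>primes_le n. ln (real p ^ (n div p)))"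
    by (rule sum.cong) (use pp prime_gt_0_nat in \<open>auto simp: ln_realpow\<close>)
  also have "\<dots> = ln (\<Prod>p\<in>primes_le n. real p ^ (n div p))"
    by (rule ln_prod[symmetric]) (use pp prime_gt_0_nat in auto)
  also have "\<dots> = ln (real (\<Prod>p\<in>primes_le n. p^(n div p)))" by simp
  also have "\<dots> \<le> ln (real (n^n))"
  proof (subst ln_le_cancel_iff)
    show "0 < real (\<Prod>p\<in>primes_le n. p^(n div p))" using Npos by (simp only: of_nat_0_less_iff)
    show "0 < real (n^n)" using False by simp
    show "real (\<Prod>p\<in>primes_le n. p^(n div p)) \<le> real (n^n)" using le by (simp only: of_nat_le_iff)
  qed
  also have "\<dots> = real n * ln (real n)" using False by (simp add: ln_realpow)
  finally show ?thesis .
qed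

lemma div_bound_real: "p > 0 \<Longrightarrow> real n / real p \<le> real (n div p) + 1"
proof -
  assume p: "p > 0"
  have "n = (n div p) * p + n mod p" by simp
  moreover have "n mod p < p" using p by simp
  ultimately have "real n \<le> (real (n div p) + 1) * real p"
    by (metis (no_types, lifting) add.commute add_le_cancel_left distrib_right
        less_or_eq_imp_le mult_1 of_nat_add of_nat_le_iff of_nat_mult)
  then show ?thesis using p by (simp add: divide_le_eq)
qed

lemma S_bound: "n \<ge> 1 \<Longrightarrow> (\<Sum>p\<in>primes_le n. ln (real p) / real p) \<le> ln (real n) + ln 4"
proof -
  assume n: "n \<ge> 1"
  have "real n * (\<Sum>p\<in>primes_le n. ln (real p) / real p) = (\<Sum>p\<in>primes_le n. (real n / real p) * ln (real p))"
    by (simp add: sum_distrib_left)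
  also have "\<dots> \<le> (\<Sum>p\<in>primes_le n. (real (n div p) + 1) * ln (real p))"
  proof (rule sum_mono)
    fix p assume "p \<in> primes_le n"
    then have "prime p" unfolding primes_le_def by auto
    then have "p > 0" "ln (real p) \<ge> 0" using prime_gt_0_nat prime_ge_1_nat by auto
    then show "(real n / real p) * ln (real p) \<le> (real (n div p) + 1) * ln (real p)"
      using div_bound_real by (intro mult_right_mono) auto
  qed
  also have "\<dots> = (\<Sum>p\<in>primes_le n. real (n div p) * ln (real p)) + (\<Sum>p\<in>primes_le n. ln (real p))"
    by (simp add: distrib_right sum.distrib)
  also have "\<dots> \<le> real n * ln (real n) + real n * ln 4"
    using legendre_sum theta_bound by (rule add_mono)
  finally have "real n * (\<Sum>p\<in>primes_le n. ln (real p) / real p) \<le> real n * (ln (real n) + ln 4)"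
    by (simp add: distrib_left)
  then show ?thesis using n by (simp add: mult_le_cancel_left_pos)
qed

definition TT :: "nat \<Rightarrow> real" where "TT n = (\<Sum>p\<in>primes_le n. 1 / real p)"
definition SS :: "nat \<Rightarrow> real" where "SS n = (\<Sum>p\<in>primes_le n. ln (real p) / real p)"

lemma primes_le_Suc: "primes_le (Suc n) = (if prime (Suc n) then insert (Suc n) (primes_le n) else primes_le n)"
  unfolding primes_le_def by (auto simp: le_Suc_eq)

lemma SS_nonneg: "SS n \<ge> 0"
  unfolding SS_def primes_le_def by (rule sum_nonneg) (auto dest: prime_ge_1_nat)

lemma ln_ratio: "(a::real) > 0 \<Longrightarrow> b > 0 \<Longrightarrow> 1 - a / b \<le> ln b - ln a"
proof -
  assume a: "a > 0" and b: "b > 0"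
  have "ln (a / b) \<le> a / b - 1" using a b by (intro ln_le_minus_one) simp
  then show ?thesis using a b by (simp add: ln_div)
qed

lemma abel_step:
  assumes "n \<ge> 2"
  shows "TT n - SS n / ln n \<le> ln (ln n) - ln (ln 2) + ln 4 * (1 / ln 2 - 1 / ln n)"
  using assms
proof (induction n rule: nat_induct_at_least)
  case base
  have "primes_le 2 = {2}" unfolding primes_le_def using prime_ge_2_nat by (auto intro: antisym)
  then show ?case unfolding TT_def SS_def by simp
next
  case (Suc n)
  have ln1: "ln (real n) > 0" using Suc.hyps by simp
  have ln2: "ln (real (Suc n)) > ln (real n)" using Suc.hyps by simp
  have key: "TT (Suc n) - SS (Suc n) / ln (Suc n) = TT n - SS n / ln (Suc n)"
  proof (cases "prime (Suc n)")
    case True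
    have fin: "Suc n \<notin> primes_le n" unfolding primes_le_def by auto
    have h1: "TT (Suc n) = TT n + 1 / real (Suc n)" and h2: "SS (Suc n) = SS n + ln (real (Suc n)) / real (Suc n)"
      unfolding TT_def SS_def primes_le_Suc using True fin by simp_all
    have h3: "(SS n + ln (real (Suc n)) / real (Suc n)) / ln (real (Suc n)) = SS n / ln (real (Suc n)) + 1 / real (Suc n)"
      using ln1 ln2 Suc.hyps by (simp add: add_divide_distrib)
    show ?thesis unfolding h1 h2 h3 by simp
  next
    case False
    then show ?thesis unfolding TT_def SS_def primes_le_Suc by simp
  qed
  have d: "1 / ln n - 1 / ln (Suc n) \<ge> 0" using ln1 ln2 by (simp add: frac_le)
  have "TT n - SS n / ln (Suc n) = (TT n - SS n / ln n) + SS n * (1 / ln n - 1 / ln (Suc n))"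
    by (simp add: field_simps)
  also have "SS n * (1 / ln n - 1 / ln (Suc n)) \<le> (ln n + ln 4) * (1 / ln n - 1 / ln (Suc n))"
    using S_bound[of n] Suc.hyps d unfolding SS_def by (intro mult_right_mono) auto
  also have "(ln n + ln 4) * (1 / ln n - 1 / ln (Suc n)) = (1 - ln n / ln (Suc n)) + ln 4 * (1 / ln n - 1 / ln (Suc n))"
    using ln1 ln2 by (simp add: distrib_right right_diff_distrib add_divide_distrib)
  also have "1 - ln n / ln (Suc n) \<le> ln (ln (Suc n)) - ln (ln n)"
    using ln1 ln2 Suc.hyps by (intro ln_ratio) auto
  finally show ?case using Suc.IH key by (simp add: algebra_simps)
qed

lemma TT_bound: "n \<ge> 2 \<Longrightarrow> TT n \<le> ln (ln (real n)) + 6"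
proof -
  assume n: "n \<ge> 2"
  have l2: "ln (2::real) \<ge> 2/3" by (rule ln2_ge_two_thirds)
  have lnn: "ln (real n) \<ge> ln 2" using n by simp
  have lnp: "ln (real n) > 0" using lnn l2 by linarith
  have l4: "ln (4::real) = 2 * ln 2" using ln_realpow[of 2 2] by simp
  have "1 - 1 / ln 2 \<le> ln (ln (2::real)) - ln 1"
    using l2 by (intro ln_ratio) auto
  moreover have "1 / ln (2::real) \<le> 3/2" using l2 by (simp add: divide_le_eq)
  ultimately have a: "- ln (ln (2::real)) \<le> 1/2" by simp
  have "ln 4 * (1 / ln 2 - 1 / ln n) = 2 - ln 4 / ln n"
    using l4 l2 by (simp add: right_diff_distrib)
  moreover have "ln 4 / ln n \<ge> 0" using lnp by simp
  ultimately have b: "ln 4 * (1 / ln 2 - 1 / ln n) \<le> 2" by linarith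
  have c: "SS n / ln n \<le> 3"
  proof -
    have "SS n \<le> ln n + ln 4" using S_bound[of n] n unfolding SS_def by simp
    also have "\<dots> \<le> 3 * ln n" using l4 lnn by simp
    finally show ?thesis using lnp by (simp add: divide_le_eq)
  qed
  show ?thesis using abel_step[OF n] a b c by linarith
qed

lemma mertens_real: "(\<Sum>p\<in>{p. prime p \<and> real p < y}. 1 / real p) \<le> ln (Logm y) + 6"
proof -
  have L: "ln (Logm y) \<ge> 0" unfolding Logm_def by simp
  show ?thesis
  proof (cases "y \<le> 2")
    case True
    have "\<not> (prime p \<and> real p < y)" for p
    proof
      assume "prime p \<and> real p < y"
      then have "p \<ge> 2" "real p < y" using prime_ge_2_nat by auto
      then have "real p \<ge> 2" by simp
      with \<open>real p < y\<close> True show False by simp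
    qed
    then have E: "{p. prime p \<and> real p < y} = {}" by blast
    show ?thesis unfolding E using L by simp
  next
    case False
    define N where "N = nat \<lfloor>y\<rfloor>"
    have N2: "N \<ge> 2" using False unfolding N_def by linarith
    have Ny: "real N \<le> y" using False unfolding N_def by linarith
    have sub: "{p. prime p \<and> real p < y} \<subseteq> primes_le N"
      unfolding primes_le_def N_def by (auto intro: le_nat_floor)
    have "(\<Sum>p\<in>{p. prime p \<and> real p < y}. 1 / real p) \<le> TT N"
      unfolding TT_def by (rule sum_mono2) (use sub in auto)
    also have "\<dots> \<le> ln (ln (real N)) + 6" using TT_bound N2 by simp
    also have "ln (ln (real N)) \<le> ln (Logm y)"
    proof -
      have p1: "ln (real N) > 0" using N2 by simp
      have "ln (real N) \<le> ln y" using N2 Ny by simp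
      also have "\<dots> \<le> Logm y" unfolding Logm_def by simp
      finally show ?thesis using p1 by simp
    qed
    finally show ?thesis by simp
  qed
qed

definition Ecut :: "nat set \<Rightarrow> (nat \<Rightarrow> real) \<Rightarrow> real \<Rightarrow> nat \<Rightarrow> real" where
  "Ecut P w t c = (\<Prod>p\<in>{p\<in>P. p < c}. (1 + t * w p) / (1 + w p))"

definition badset :: "nat set \<Rightarrow> (nat \<Rightarrow> real) \<Rightarrow> real \<Rightarrow> real \<Rightarrow> nat set set" where
  "badset P w t l = {S \<in> Pow P. \<exists>c. t ^ card {p\<in>S. p < c} \<ge> l * Ecut P w t c}"

lemma sum_Pow_prod:
  fixes w :: "nat \<Rightarrow> real"
  assumes "finite P"
  shows "(\<Sum>S\<in>Pow P. \<Prod>p\<in>S. w p) = (\<Prod>p\<in>P. 1 + w p)"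
  using prod_add[OF assms, of w "\<lambda>_. 1"] by (simp add: add.commute)

lemma sum_sub_Pow_le:
  fixes w :: "nat \<Rightarrow> real"
  assumes "finite P" "\<forall>p\<in>P. w p > 0" "B \<subseteq> Pow P"
  shows "(\<Sum>S\<in>B. \<Prod>p\<in>S. w p) \<le> (\<Prod>p\<in>P. 1 + w (p::nat))"
proof -
  have "(\<Sum>S\<in>B. \<Prod>p\<in>S. w p) \<le> (\<Sum>S\<in>Pow P. \<Prod>p\<in>S. w p)"
  proof (rule sum_mono2)
    show "finite (Pow P)" using assms by simp
    show "B \<subseteq> Pow P" by fact
    fix S assume "S \<in> Pow P - B"
    then have "S \<subseteq> P" by auto
    then show "0 \<le> (\<Prod>p\<in>S. w p)" using assms by (intro prod_nonneg) (meson less_imp_le subsetD)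
  qed
  then show ?thesis using sum_Pow_prod[OF assms(1)] by simp
qed

lemma le_div_l: "(W::real) \<ge> 0 \<Longrightarrow> 0 < l \<Longrightarrow> l \<le> 1 \<Longrightarrow> W \<le> W / l"
  by (simp add: le_divide_eq mult_left_le)

lemma doob_aux:
  fixes w :: "nat \<Rightarrow> real"
  assumes "finite P" "\<forall>p\<in>P. w p > 0" "t > 0"
  shows "\<forall>l>0. (\<Sum>S\<in>badset P w t l. \<Prod>p\<in>S. w p) \<le> (\<Prod>p\<in>P. 1 + w p) / l"
  using assms
proof (induction P rule: finite_linorder_min_induct)
  case empty
  show ?case
  proof (intro allI impI)
    fix l :: real assume l: "l > 0"
    show "(\<Sum>S\<in>badset {} w t l. \<Prod>p\<in>S. w p) \<le> (\<Prod>p\<in>{}. 1 + w p) / l"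
    proof (cases "l \<le> 1")
      case True
      have "(\<Sum>S\<in>badset {} w t l. \<Prod>p\<in>S. w p) \<le> (\<Prod>p\<in>{}. 1 + w p)"
        by (rule sum_sub_Pow_le) (auto simp: badset_def)
      also have "\<dots> \<le> (\<Prod>p\<in>{}. 1 + w p) / l" using True l by (simp add: le_divide_eq)
      finally show ?thesis .
    next
      case False
      have "badset {} w t l = {}" using False unfolding badset_def Ecut_def by auto
      then show ?thesis using l by simp
    qed
  qed
next
  case (insert q F)
  have wF: "\<forall>p\<in>F. w p > 0" and wq: "w q > 0" using insert.prems by auto
  have IH: "\<And>l. l > 0 \<Longrightarrow> (\<Sum>S\<in>badset F w t l. \<Prod>p\<in>S. w p) \<le> (\<Prod>p\<in>F. 1 + w p) / l"
    using insert.IH wF insert.prems(2) by blast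
  have qF: "q \<notin> F" using insert.hyps by auto
  define r where "r = (1 + t * w q) / (1 + w q)"
  have r: "r > 0" unfolding r_def using wq insert.prems(2) by (intro divide_pos_pos add_pos_pos mult_pos_pos) auto
  define WF where "WF = (\<Prod>p\<in>F. 1 + w p)"
  have WP: "(\<Prod>p\<in>insert q F. 1 + w p) = (1 + w q) * WF"
    unfolding WF_def using insert.hyps qF by simp
  show ?case
  proof (intro allI impI)
    fix l :: real assume l: "l > 0"
    show "(\<Sum>S\<in>badset (insert q F) w t l. \<Prod>p\<in>S. w p) \<le> (\<Prod>p\<in>insert q F. 1 + w p) / l"
    proof (cases "l \<le> 1")
      case True
      have "(\<Sum>S\<in>badset (insert q F) w t l. \<Prod>p\<in>S. w p) \<le> (\<Prod>p\<in>insert q F. 1 + w p)"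
        by (rule sum_sub_Pow_le) (use insert in \<open>auto simp: badset_def\<close>)
      also have "\<dots> \<le> (\<Prod>p\<in>insert q F. 1 + w p) / l"
        using True l insert.prems(1) by (intro le_div_l prod_nonneg) (auto intro: add_nonneg_nonneg less_imp_le)
      finally show ?thesis .
    next
      case False
      have cut_small: "\<And>c. c \<le> q \<Longrightarrow> {p\<in>insert q F. p < c} = {}"
        using insert.hyps by force
      have cut_big: "\<And>c. c > q \<Longrightarrow> {p\<in>insert q F. p < c} = insert q {p\<in>F. p < c}"
        by auto
      have Ebig: "\<And>c. c > q \<Longrightarrow> Ecut (insert q F) w t c = r * Ecut F w t c"
      proof -
        fix c assume c: "c > q"
        have fin: "finite {p\<in>F. p < c}" using insert.hyps by simp
        show "Ecut (insert q F) w t c = r * Ecut F w t c"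
          unfolding Ecut_def cut_big[OF c] r_def using fin qF by simp
      qed
      have Esmall: "\<And>c. c \<le> q \<Longrightarrow> Ecut (insert q F) w t c = 1"
      proof -
        fix c assume c: "c \<le> q"
        show "Ecut (insert q F) w t c = 1" unfolding Ecut_def cut_small[OF c] by simp
      qed
      have part1: "badset (insert q F) w t l \<inter> Pow F \<subseteq> badset F w t (l * r)"
      proof
        fix S assume S: "S \<in> badset (insert q F) w t l \<inter> Pow F"
        then have SF: "S \<subseteq> F" by auto
        from S obtain c where c: "t ^ card {p\<in>S. p < c} \<ge> l * Ecut (insert q F) w t c"
          unfolding badset_def by auto
        show "S \<in> badset F w t (l * r)"
        proof (cases "c \<le> q")
          case True
          have E0: "{p\<in>S. p < c} = {}" using SF insert.hyps True by force
          have "t ^ card {p\<in>S. p < c} = 1" unfolding E0 by simp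
          then have "1 \<ge> l" using c Esmall[OF True] by simp
          then show ?thesis using False by simp
        next
          case False': False
          then have "t ^ card {p\<in>S. p < c} \<ge> (l * r) * Ecut F w t c"
            using c Ebig[of c] by (simp add: mult.assoc)
          then show ?thesis unfolding badset_def using SF by auto
        qed
      qed
      have part2: "\<And>S. S \<in> Pow F \<Longrightarrow> insert q S \<in> badset (insert q F) w t l \<Longrightarrow> S \<in> badset F w t (l * r / t)"
      proof -
        fix S assume SF: "S \<in> Pow F" and S: "insert q S \<in> badset (insert q F) w t l"
        from S obtain c where c: "t ^ card {p\<in>insert q S. p < c} \<ge> l * Ecut (insert q F) w t c"
          unfolding badset_def by auto
        have finS: "finite S" using SF insert.hyps finite_subset by auto
        show "S \<in> badset F w t (l * r / t)"
        proof (cases "c \<le> q")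
          case True
          have E0: "{p\<in>insert q S. p < c} = {}" using SF insert.hyps True by force
          have "t ^ card {p\<in>insert q S. p < c} = 1" unfolding E0 by simp
          then have "1 \<ge> l" using c Esmall[OF True] by simp
          then show ?thesis using False by simp
        next
          case False': False
          have "{p\<in>insert q S. p < c} = insert q {p\<in>S. p < c}" using False' by auto
          moreover have "q \<notin> {p\<in>S. p < c}" using SF qF by auto
          ultimately have cd: "card {p\<in>insert q S. p < c} = Suc (card {p\<in>S. p < c})"
            using finS by simp
          have "t * t ^ card {p\<in>S. p < c} \<ge> l * (r * Ecut F w t c)"
            using c Ebig[of c] False' cd by simp
          then have "t ^ card {p\<in>S. p < c} \<ge> (l * r / t) * Ecut F w t c"
            using insert.prems(2) by (simp add: field_simps)
          then show ?thesis unfolding badset_def using SF by auto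
        qed
      qed
      have finF: "finite F" by fact
      have PowI: "Pow (insert q F) = Pow F \<union> insert q ` Pow F" by (rule Pow_insert)
      let ?B = "badset (insert q F) w t l"
      have Bsplit: "?B = (?B \<inter> Pow F) \<union> (?B \<inter> insert q ` Pow F)"
        unfolding badset_def using PowI by blast
      have disj: "(?B \<inter> Pow F) \<inter> (?B \<inter> insert q ` Pow F) = {}" using qF by auto
      have nonneg: "\<And>S. S \<subseteq> insert q F \<Longrightarrow> 0 \<le> (\<Prod>p\<in>S. w p)"
        using insert.prems(1) by (intro prod_nonneg) (auto intro: less_imp_le)
      have s1: "(\<Sum>S\<in>?B \<inter> Pow F. \<Prod>p\<in>S. w p) \<le> (\<Sum>S\<in>badset F w t (l * r). \<Prod>p\<in>S. w p)"
      proof (rule sum_mono2)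
        show "finite (badset F w t (l * r))" unfolding badset_def using finF by simp
        show "?B \<inter> Pow F \<subseteq> badset F w t (l * r)" by (rule part1)
        fix S assume "S \<in> badset F w t (l * r) - ?B \<inter> Pow F"
        then show "0 \<le> (\<Prod>p\<in>S. w p)" using nonneg unfolding badset_def by auto
      qed
      have seteq: "?B \<inter> insert q ` Pow F = insert q ` {S\<in>Pow F. insert q S \<in> ?B}" by auto
      have inj: "inj_on (insert q) {S\<in>Pow F. insert q S \<in> ?B}"
      proof (rule inj_onI)
        fix S1 S2 assume "S1 \<in> {S\<in>Pow F. insert q S \<in> ?B}" "S2 \<in> {S\<in>Pow F. insert q S \<in> ?B}"
          and e: "insert q S1 = insert q S2"
        then have "q \<notin> S1" "q \<notin> S2" using qF by auto
        then show "S1 = S2" using e insert_ident by metis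
      qed
      have "(\<Sum>S\<in>?B \<inter> insert q ` Pow F. \<Prod>p\<in>S. w p) = sum ((\<lambda>S. \<Prod>p\<in>S. w p) \<circ> insert q) {S\<in>Pow F. insert q S \<in> ?B}"
        unfolding seteq by (rule sum.reindex[OF inj])
      also have "\<dots> = (\<Sum>S\<in>{S\<in>Pow F. insert q S \<in> ?B}. \<Prod>p\<in>insert q S. w p)" by (simp add: o_def)
      also have "\<dots> = (\<Sum>S\<in>{S\<in>Pow F. insert q S \<in> ?B}. w q * (\<Prod>p\<in>S. w p))"
      proof (rule sum.cong)
        fix S assume "S \<in> {S\<in>Pow F. insert q S \<in> ?B}"
        then have "S \<subseteq> F" by auto
        then have "finite S" "q \<notin> S" using finF qF finite_subset by auto
        then show "(\<Prod>p\<in>insert q S. w p) = w q * (\<Prod>p\<in>S. w p)" by simp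
      qed simp
      also have "\<dots> = w q * (\<Sum>S\<in>{S\<in>Pow F. insert q S \<in> ?B}. \<Prod>p\<in>S. w p)"
        by (simp add: sum_distrib_left)
      also have "(\<Sum>S\<in>{S\<in>Pow F. insert q S \<in> ?B}. \<Prod>p\<in>S. w p) \<le> (\<Sum>S\<in>badset F w t (l * r / t). \<Prod>p\<in>S. w p)"
      proof (rule sum_mono2)
        show "finite (badset F w t (l * r / t))" unfolding badset_def using finF by simp
        show "{S\<in>Pow F. insert q S \<in> ?B} \<subseteq> badset F w t (l * r / t)" using part2 by auto
        fix S assume "S \<in> badset F w t (l * r / t) - {S\<in>Pow F. insert q S \<in> ?B}"
        then show "0 \<le> (\<Prod>p\<in>S. w p)" using nonneg unfolding badset_def by auto
      qed
      finally have s2: "(\<Sum>S\<in>?B \<inter> insert q ` Pow F. \<Prod>p\<in>S. w p) \<le> w q * (\<Sum>S\<in>badset F w t (l * r / t). \<Prod>p\<in>S. w p)"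
        using wq by (simp add: mult_left_mono)
      have finB: "finite ?B" unfolding badset_def using insert.hyps by simp
      have "(\<Sum>S\<in>?B. \<Prod>p\<in>S. w p) = (\<Sum>S\<in>?B \<inter> Pow F. \<Prod>p\<in>S. w p) + (\<Sum>S\<in>?B \<inter> insert q ` Pow F. \<Prod>p\<in>S. w p)"
        by (subst Bsplit, rule sum.union_disjoint) (use finB disj in auto)
      also have "\<dots> \<le> WF / (l * r) + w q * (WF / (l * r / t))"
        using s1 s2 IH[of "l * r"] IH[of "l * r / t"] l r insert.prems(2) wq unfolding WF_def
        by (smt (verit) mult_left_mono zero_less_divide_iff mult_pos_pos)
      also have "\<dots> = WF * (1 + t * w q) / (l * r)"
        using l r insert.prems(2) by (simp add: field_simps)
      also have "\<dots> = (1 + w q) * WF / l"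
      proof -
        have p1: "1 + t * w q > 0" using wq insert.prems(2) by (intro add_pos_pos mult_pos_pos) auto
        have p2: "1 + w q > 0" using wq by simp
        have ne: "l + l * (t * w q) \<noteq> 0" using l p1
          by (metis distrib_left mult_1_right mult_pos_pos less_irrefl)
        show ?thesis unfolding r_def using l p1 p2 ne by (simp add: field_simps)
      qed
      finally show ?thesis using WP by simp
    qed
  qed
qed

lemma doob:
  fixes w :: "nat \<Rightarrow> real"
  assumes "finite P" "\<forall>p\<in>P. w p > 0" "t > 0" "l > 0"
  shows "(\<Sum>S\<in>badset P w t l. \<Prod>p\<in>S. w p) \<le> (\<Prod>p\<in>P. 1 + w p) / l"
  using doob_aux[OF assms(1-3)] assms(4) by blast

lemma pf_prod_primes:
  assumes "finite S" "\<forall>p\<in>S. prime (p::nat)"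
  shows "prime_factors (\<Prod>S) = S"
proof -
  have "0 \<notin> id ` S" using assms by auto
  then have "prime_factors (prod id S) = \<Union>((prime_factors \<circ> id) ` S)"
    using prime_factors_prod[OF assms(1)] by blast
  also have "\<dots> = S" using assms by (auto simp: prime_factorization_prime)
  finally show ?thesis by simp
qed

lemma prod_primes_pos:
  assumes "\<forall>p\<in>S. prime (p::nat)"
  shows "\<Prod>S > 0"
  using assms prime_gt_0_nat by (auto intro: prod_pos)

lemma sqf_prod_primes:
  assumes "finite S" "\<forall>p\<in>S. prime (p::nat)"
  shows "squarefree (\<Prod>S)"
proof -
  have "squarefree (prod id S)"
    by (rule squarefree_prod_coprime) (use assms in \<open>auto intro: primes_coprime squarefree_prime\<close>)
  then show ?thesis by simp
qed

lemma sqf_eq_prod_pf: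
  assumes "n > 0" "squarefree (n::nat)"
  shows "\<Prod>(prime_factors n) = n"
proof -
  have m: "\<forall>p\<in>prime_factors n. multiplicity p n = 1"
    using squarefree_factorial_semiring'[of n] assms by auto
  have "n = (\<Prod>p\<in>prime_factors n. p ^ multiplicity p n)"
    using prime_factorization_nat[OF assms(1)] .
  also have "\<dots> = (\<Prod>p\<in>prime_factors n. p)" using m by (intro prod.cong) auto
  finally show ?thesis by simp
qed

lemma tau_prod_primes:
  assumes "finite T" "\<forall>p\<in>T. prime (p::nat)"
  shows "tau (\<Prod>T) = 2 ^ card T"
proof -
  have pos: "\<Prod>T > 0" using prod_primes_pos assms(2) .
  have eq: "{d. d dvd \<Prod>T} = (\<lambda>U. \<Prod>U) ` Pow T"
  proof
    show "{d. d dvd \<Prod>T} \<subseteq> (\<lambda>U. \<Prod>U) ` Pow T"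
    proof
      fix d assume "d \<in> {d. d dvd \<Prod>T}"
      then have d: "d dvd \<Prod>T" by simp
      have dpos: "d > 0" using dvd_pos_nat[OF pos d] .
      have "squarefree d" using squarefree_mono[OF d sqf_prod_primes[OF assms]] .
      then have "d = \<Prod>(prime_factors d)" using sqf_eq_prod_pf dpos by simp
      moreover have "prime_factors d \<subseteq> T"
        using dvd_prime_factors[of "\<Prod>T" d] d pos pf_prod_primes[OF assms] by auto
      ultimately show "d \<in> (\<lambda>U. \<Prod>U) ` Pow T" by blast
    qed
    show "(\<lambda>U. \<Prod>U) ` Pow T \<subseteq> {d. d dvd \<Prod>T}"
    proof
      fix d assume "d \<in> (\<lambda>U. \<Prod>U) ` Pow T"
      then obtain U where U: "U \<subseteq> T" "d = \<Prod>U" by auto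
      have "\<Prod>U dvd \<Prod>T" using prod_dvd_prod_subset[OF assms(1) U(1), of id] by simp
      then show "d \<in> {d. d dvd \<Prod>T}" using U by simp
    qed
  qed
  have inj: "inj_on (\<lambda>U. \<Prod>U) (Pow T)"
  proof (rule inj_onI)
    fix U V assume UT: "U \<in> Pow T" and VT: "V \<in> Pow T" and e: "\<Prod>U = (\<Prod>V :: nat)"
    have fU: "finite U" "\<forall>p\<in>U. prime p" using UT assms finite_subset[of U T] by auto
    have fV: "finite V" "\<forall>p\<in>V. prime p" using VT assms finite_subset[of V T] by auto
    show "U = V" using pf_prod_primes[OF fU] pf_prod_primes[OF fV] e by metis
  qed
  have "tau (\<Prod>T) = card ((\<lambda>U. \<Prod>U) ` Pow T)" unfolding tau_def eq ..
  also have "\<dots> = card (Pow T)" using inj by (rule card_image)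
  also have "\<dots> = 2 ^ card T" using assms(1) by (rule card_Pow)
  finally show ?thesis .
qed

lemma part_lt_prod:
  assumes "finite S" "\<forall>p\<in>S. prime (p::nat)"
  shows "part_lt (\<Prod>S) y = \<Prod>{p\<in>S. real p < y}"
  unfolding part_lt_def pf_prod_primes[OF assms] by simp

definition PP :: "real \<Rightarrow> nat set" where "PP x = {p. prime p \<and> real p < x}"

lemma finite_PP: "finite (PP x)"
proof -
  have "PP x \<subseteq> {..nat \<lceil>x\<rceil>}"
  proof
    fix p assume "p \<in> PP x"
    then have "real p < x" unfolding PP_def by simp
    then have "real p \<le> real_of_int \<lceil>x\<rceil>" by linarith
    then have "p \<le> nat \<lceil>x\<rceil>" by linarith
    then show "p \<in> {..nat \<lceil>x\<rceil>}" by simp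
  qed
  then show ?thesis by (rule finite_subset) simp
qed

lemma bij_S_lt: "bij_betw (\<lambda>S. \<Prod>S) (Pow (PP x)) (S_lt x)"
proof (rule bij_betw_imageI)
  show "inj_on (\<lambda>S. \<Prod>S) (Pow (PP x))"
  proof (rule inj_onI)
    fix U V assume UT: "U \<in> Pow (PP x)" and VT: "V \<in> Pow (PP x)" and e: "\<Prod>U = (\<Prod>V :: nat)"
    have fU: "finite U" "\<forall>p\<in>U. prime p" using UT finite_PP[of x] finite_subset[of U "PP x"] unfolding PP_def by auto
    have fV: "finite V" "\<forall>p\<in>V. prime p" using VT finite_PP[of x] finite_subset[of V "PP x"] unfolding PP_def by auto
    show "U = V" using pf_prod_primes[OF fU] pf_prod_primes[OF fV] e by metis
  qed
  show "(\<lambda>S. \<Prod>S) ` Pow (PP x) = S_lt x"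
  proof
    show "(\<lambda>S. \<Prod>S) ` Pow (PP x) \<subseteq> S_lt x"
    proof
      fix n assume "n \<in> (\<lambda>S. \<Prod>S) ` Pow (PP x)"
      then obtain S where S: "S \<subseteq> PP x" "n = \<Prod>S" by auto
      have fS: "finite S" "\<forall>p\<in>S. prime p" using S finite_PP[of x] finite_subset[of S "PP x"] unfolding PP_def by auto
      have "\<forall>p\<in>prime_factors n. real p < x" using S pf_prod_primes[OF fS] unfolding PP_def by auto
      then show "n \<in> S_lt x" unfolding S_lt_def
        using S(2) prod_primes_pos[OF fS(2)] sqf_prod_primes[OF fS] by simp
    qed
    show "S_lt x \<subseteq> (\<lambda>S. \<Prod>S) ` Pow (PP x)"
    proof
      fix n assume "n \<in> S_lt x"
      then have n: "n > 0" "squarefree n" "\<forall>p\<in>prime_factors n. real p < x" unfolding S_lt_def by auto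
      have "prime_factors n \<subseteq> PP x" using n unfolding PP_def by auto
      moreover have "n = \<Prod>(prime_factors n)" using sqf_eq_prod_pf n by simp
      ultimately show "n \<in> (\<lambda>S. \<Prod>S) ` Pow (PP x)" by blast
    qed
  qed
qed

lemma exp_quad:
  fixes z :: real assumes "\<bar>z\<bar> \<le> 1" shows "exp z \<le> 1 + z + z^2"
proof (cases "z \<ge> 0")
  case True then show ?thesis using exp_bound[of z] assms by simp
next
  case False
  define w where "w = -z"
  have w: "0 < w" "w \<le> 1" using False assms unfolding w_def by auto
  have "exp z = 1 / exp w" unfolding w_def by (simp add: exp_minus field_simps)
  also have "\<dots> \<le> 1 / (1 + w)" using w by (intro divide_left_mono) (auto simp: add_pos_pos)
  also have "\<dots> \<le> 1 - w + w^2"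
  proof -
    have "1 \<le> (1 - w + w^2) * (1 + w)" using w by (simp add: algebra_simps power2_eq_square power3_eq_cube)
    then show ?thesis using w by (simp add: divide_le_eq)
  qed
  finally show ?thesis unfolding w_def by simp
qed

definition c0 :: real where "c0 = ln 4 - 1"

lemma ln4: "ln (4::real) = 2 * ln 2"
  using ln_realpow[of 2 2] by simp

lemma c0_bounds: "1/3 \<le> c0" "c0 \<le> 7/18"
  using ln2_ge_two_thirds ln2_le_25_over_36 unfolding c0_def ln4 by auto

lemma phi_bound:
  assumes "\<bar>e\<bar> \<le> 1"
  shows "2 powr (1 + e) \<le> 2 + (1 + c0) * e + 2 * e^2"
proof -
  have l2: "0 < ln (2::real)" "ln (2::real) \<le> 1" using ln2_ge_two_thirds ln2_le_25_over_36 by auto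
  have z: "\<bar>e * ln 2\<bar> \<le> 1" using assms l2 by (simp add: abs_mult mult_le_one)
  have "2 powr (1 + e) = exp (ln 2 + e * ln 2)" by (simp add: powr_def algebra_simps)
  also have "\<dots> = 2 * exp (e * ln 2)" by (simp add: exp_add)
  also have "\<dots> \<le> 2 * (1 + e * ln 2 + (e * ln 2)^2)" using exp_quad[OF z] by simp
  also have "(e * ln 2)^2 \<le> e^2"
  proof -
    have "(ln 2)^2 \<le> (1::real)" using l2 by (intro power_le_one) auto
    then have "e^2 * (ln 2)^2 \<le> e^2" by (intro mult_left_le) auto
    then show ?thesis by (simp add: power_mult_distrib)
  qed
  then have "2 * (1 + e * ln 2 + (e * ln 2)^2) \<le> 2 + (1 + c0) * e + 2 * e^2"
    unfolding c0_def ln4 by (simp add: algebra_simps)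
  finally show ?thesis by simp
qed

definition eta :: real where "eta = c0^2 / 64"
definition del :: real where "del = c0^3 / 1024"
definition kap :: real where "kap = c0^3 / 128"

lemma core:
  fixes a l f e B :: real and j :: nat
  assumes a: "a \<ge> 1" and l: "0 \<le> l" "l \<le> 8 * a / c0" and e: "\<bar>e\<bar> \<le> 1"
    and H1: "e * (a - c0 * l) \<ge> c0 * eta * (real j)^2"
    and H2: "e^2 \<le> eta^2 * (real j)^2 / a"
    and H3: "f \<le> del * (real j + 1)^2" and f0: "f \<ge> 0" and B: "B \<ge> 0"
  shows "(1 + e) * (a - f + l) \<ge> a + (kap * j - (1 + 3 * B)) + (2 powr (1 + e) - 1) * (l + B)"
proof -
  have cb: "1/3 \<le> c0" "c0 \<le> 7/18" by (rule c0_bounds)+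
  define J where "J = real j"
  define K where "K = c0^3"
  have K: "0 < K" "K \<le> 1" unfolding K_def using cb by (auto simp: power_le_one)
  have JJ: "J \<le> J^2" unfolding J_def by (cases j) (auto simp: power2_eq_square)
  have J0: "0 \<le> J" unfolding J_def by simp
  have s1: "2 powr (1 + e) \<le> 2 + (1 + c0) * e + 2 * e^2" by (rule phi_bound[OF e])
  have s2: "2 powr (1 + e) \<le> 4"
  proof -
    have "2 powr (1 + e) \<le> 2 powr 2" using e by (intro powr_mono) auto
    then show ?thesis by simp
  qed
  have s3: "(2 powr (1 + e) - 1) * l \<le> (1 + (1 + c0) * e + 2 * e^2) * l"
    using s1 l by (intro mult_right_mono) auto
  have s4: "(2 powr (1 + e) - 1) * B \<le> 3 * B" using s2 B by (intro mult_right_mono[of _ 3, simplified]) auto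
  have s5: "e^2 * l \<le> (eta^2 * J^2 / a) * (8 * a / c0)"
    using H2 l a unfolding J_def by (intro mult_mono) auto
  have s5': "(eta^2 * J^2 / a) * (8 * a / c0) = K * J^2 / 512"
    unfolding eta_def K_def using a cb by (simp add: field_simps power2_eq_square power3_eq_cube) 
  have s6: "(1 + e) * f \<le> 2 * (del * (J + 1)^2)"
    using H3 f0 e unfolding J_def by (intro mult_mono) auto
  have s6': "2 * (del * (J + 1)^2) \<le> K * J^2 / 256 + K / 256"
  proof -
    have q1: "(J + 1)^2 = J^2 + 2*J + 1" "(J - 1)^2 = J^2 - 2*J + 1" by (simp_all add: power2_eq_square algebra_simps)
    have "0 \<le> (J - 1)^2" by simp
    then have "(J + 1)^2 \<le> 2 * J^2 + 2" using q1 by linarith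
    then have "2 * (del * (J + 1)^2) \<le> 2 * (del * (2 * J^2 + 2))"
      unfolding del_def using K(1) K_def by (intro mult_left_mono) auto
    then show ?thesis unfolding del_def K_def by (simp add: algebra_simps)
  qed
  have h1: "c0 * eta * J^2 = K * J^2 / 64" unfolding eta_def K_def by (simp add: power2_eq_square power3_eq_cube)
  have kj: "kap * J \<le> K * J^2 / 128" unfolding kap_def K_def using JJ K unfolding K_def by (simp add: mult_left_mono)
  have H1a: "e * (a - c0 * l) \<ge> K * J^2 / 64" using H1 h1 unfolding J_def by linarith
  have H1b: "e * (a - c0 * l) = e * a - c0 * (e * l)" by (simp add: algebra_simps)
  have H1': "e * a - c0 * (e * l) \<ge> K * J^2 / 64" using H1a H1b by linarith
  have "(1 + e) * (a - f + l) - (a + (kap * J - (1 + 3 * B)) + (2 powr (1 + e) - 1) * (l + B))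
      = e * a - (1 + e) * f + l + e * l - kap * J + 1 + 3 * B - (2 powr (1 + e) - 1) * l - (2 powr (1 + e) - 1) * B"
    by (simp add: algebra_simps)
  moreover have "(1 + (1 + c0) * e + 2 * e^2) * l = l + e * l + c0 * (e * l) + 2 * (e^2 * l)"
    by (simp add: algebra_simps)
  ultimately have "(1 + e) * (a - f + l) - (a + (kap * J - (1 + 3 * B)) + (2 powr (1 + e) - 1) * (l + B)) \<ge> 0"
    using s3 s4 s5 s5' s6 s6' H1' kj K by linarith
  then show ?thesis unfolding J_def by simp
qed

definition ineq :: "real \<Rightarrow> real \<Rightarrow> real \<Rightarrow> real \<Rightarrow> real \<Rightarrow> real \<Rightarrow> bool" where
  "ineq a l f B s g \<longleftrightarrow> s * (a - f + l) \<ge> a + g + (2 powr s - 1) * (l + B)"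

lemma c0_pos: "c0 > 0" using c0_bounds by simp

lemma del_le: "del \<le> 1/1024" "del > 0"
proof -
  have "c0^3 \<le> 1" using c0_bounds by (intro power_le_one) auto
  then show "del \<le> 1/1024" unfolding del_def by simp
  show "del > 0" unfolding del_def using c0_pos by simp
qed

lemma coreF:
  fixes a l f B :: real and j :: nat
  assumes a: "a \<ge> 1" and l: "l \<ge> 8 * a / c0" and f: "f \<le> del * (a + l)" "f \<ge> 0" and B: "B \<ge> 0"
    and j: "real j \<le> l"
  shows "ineq a l f B (1/2) (real j / 25 - B)"
proof -
  have cb: "1/3 \<le> c0" "c0 \<le> 7/18" by (rule c0_bounds)+
  have s2: "sqrt 2 \<le> (283/200::real)"
  proof -
    have "sqrt 2 \<le> sqrt ((283/200::real)^2)" by (intro real_sqrt_le_mono) (simp add: power2_eq_square)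
    then show ?thesis by simp
  qed
  have p: "2 powr (1/2::real) = sqrt 2" by (simp add: powr_half_sqrt)
  have "8 * a / c0 \<ge> 0" using a c0_pos by simp
  then have l0: "l \<ge> 0" using l by linarith
  have al: "a \<le> l / 20"
  proof -
    have "8 * a \<le> c0 * l" using l c0_pos by (simp add: divide_le_eq mult.commute)
    also have "\<dots> \<le> 7/18 * l" using cb l0 by (intro mult_right_mono) auto
    finally have "8 * a \<le> 7/18 * l" .
    then show ?thesis using l0 by linarith
  qed
  have t1: "(2 powr (1/2) - 1) * l \<le> 83/200 * l" unfolding p using s2 l0 by (intro mult_right_mono) auto
  have t2: "(2 powr (1/2) - 1) * B \<le> 83/200 * B" unfolding p using s2 B by (intro mult_right_mono) auto
  have t3: "del * (a + l) \<le> 1/1024 * (a + l)" using del_le l0 a by (intro mult_right_mono) auto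
  have t3': "f \<le> a/1024 + l/1024" using t3 f by simp
  have e2: "(2 powr (1/2) - 1) * (l + B) = (2 powr (1/2) - 1) * l + (2 powr (1/2) - 1) * B"
    by (simp only: distrib_left)
  have h: "(1/2) * (a - f + l) = a/2 - f/2 + l/2" by simp
  have "(1/2) * (a - f + l) - (a + (real j / 25 - B) + (2 powr (1/2) - 1) * (l + B)) \<ge> 0"
    unfolding h e2 using t1 t2 t3' f al j B l0 by linarith
  then show ?thesis unfolding ineq_def by simp
qed

lemma floor_nat_exists: "x \<ge> 0 \<Longrightarrow> \<exists>j::nat. real j \<le> x \<and> x < real j + 1"
  by (rule exI[of _ "nat \<lfloor>x\<rfloor>"]) linarith

lemma key:
  fixes a l f B :: real
  assumes a: "a \<ge> 1" and l: "l \<ge> 0" and B: "B \<ge> 0" and f0: "f \<ge> 0"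
    and fb: "f \<le> del * min ((max 1 l - a / c0)^2 / a) (a + max 1 l)"
  shows "\<exists>j::nat. real j \<le> l + a / c0 \<and>
     ((eta * real j / sqrt a \<le> 1 \<and> ineq a l f B (1 - eta * real j / sqrt a) (kap * real j - (1 + 3 * B))) \<or>
      ineq a l f B (1 + eta * real j / sqrt a) (kap * real j - (1 + 3 * B)) \<or>
      ineq a l f B (1/2) (real j / 25 - B))"
proof -
  have cb: "1/3 \<le> c0" "c0 \<le> 7/18" by (rule c0_bounds)+
  have c0p: "c0 > 0" by (rule c0_pos)
  define m where "m = a / c0"
  have m1: "m \<ge> 1" unfolding m_def using a cb by (simp add: le_divide_eq)
  have cm: "c0 * m = a" unfolding m_def using c0p by simp
  define h where "h = sqrt a"
  have h1: "h \<ge> 1" unfolding h_def using a by simp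
  have hh: "h * h = a" unfolding h_def using a by simp
  have "del * min ((max 1 l - a / c0)^2 / a) (a + max 1 l) \<le> del * ((max 1 l - a / c0)^2 / a)"
    using del_le by (intro mult_left_mono) auto
  then have fQ: "f \<le> del * ((max 1 l - m)^2 / a)" using fb unfolding m_def by linarith
  have "del * min ((max 1 l - a / c0)^2 / a) (a + max 1 l) \<le> del * (a + max 1 l)"
    using del_le by (intro mult_left_mono) auto
  then have fL: "f \<le> del * (a + max 1 l)" using fb by linarith
  have etap: "eta > 0" unfolding eta_def using c0p by simp
  have etac: "eta / c0 = c0 / 64" unfolding eta_def using c0p by (simp add: power2_eq_square)
  show ?thesis
  proof (cases "l \<le> m")
    case True
    have d0: "m - l \<ge> 0" using True by simp
    obtain j :: nat where j1: "real j \<le> (m - l) / h" and j2: "(m - l) / h < real j + 1"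
      using floor_nat_exists[of "(m - l) / h"] d0 h1 by auto
    define J where "J = real j"
    have J0: "J \<ge> 0" unfolding J_def by simp
    have jh: "J * h \<le> m - l" using j1 h1 unfolding J_def by (simp add: le_divide_eq)
    have jh2: "m - l < (J + 1) * h" using j2 h1 unfolding J_def by (simp add: divide_less_eq)
    define e where "e = eta * J / h"
    have e0: "e \<ge> 0" unfolding e_def using etap J0 h1 by simp
    have e1: "\<bar>e\<bar> \<le> 1"
    proof -
      have "e = eta * (J * h) / a" unfolding e_def using hh h1 a by (simp add: field_simps)
      also have "\<dots> \<le> eta * m / a" using jh d0 etap a True l
        by (intro divide_right_mono mult_left_mono) auto
      also have "\<dots> = eta / c0" unfolding m_def using a c0p by simp
      also have "\<dots> \<le> 1" using etac cb by linarith
      finally show ?thesis using e0 by simp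
    qed
    have H1: "e * (a - c0 * l) \<ge> c0 * eta * J^2"
    proof -
      have am: "a - c0 * l = c0 * (m - l)" using cm by (simp add: algebra_simps)
      have "e * (a - c0 * l) = (c0 * eta * J / h) * (m - l)" unfolding e_def am using h1
        by (simp add: field_simps)
      also have "\<dots> \<ge> (c0 * eta * J / h) * (J * h)" using jh c0p etap J0 h1
        by (intro mult_left_mono) auto
      finally show ?thesis using h1 by (simp add: power2_eq_square)
    qed
    have H2: "e^2 \<le> eta^2 * J^2 / a" unfolding e_def using hh
      by (simp add: power_divide power_mult_distrib power2_eq_square mult_ac)
    have Q: "(max 1 l - m)^2 \<le> (m - l)^2"
    proof (cases "l \<ge> 1")
      case True then show ?thesis by (simp add: power2_eq_square algebra_simps)
    next
      case False
      then have "max 1 l = 1" by simp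
      then have "\<bar>max 1 l - m\<bar> \<le> \<bar>m - l\<bar>" using m1 False l by simp
      then show ?thesis by (simp add: abs_le_square_iff)
    qed
    have "(m - l)^2 \<le> ((J + 1) * h)^2" using jh2 d0 by (intro power_mono) auto
    also have "\<dots> = (J + 1)^2 * a" using hh by (simp add: power2_eq_square algebra_simps)
    finally have Q2: "(m - l)^2 / a \<le> (J + 1)^2" using a by (simp add: divide_le_eq)
    have H3: "f \<le> del * (J + 1)^2"
    proof -
      have "(max 1 l - m)^2 / a \<le> (m - l)^2 / a" using Q a by (intro divide_right_mono) auto
      then have "(max 1 l - m)^2 / a \<le> (J + 1)^2" using Q2 by linarith
      then have "del * ((max 1 l - m)^2 / a) \<le> del * (J + 1)^2" using del_le by (intro mult_left_mono) auto
      then show ?thesis using fQ by linarith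
    qed
    have l8: "l \<le> 8 * a / c0" using True l m1 unfolding m_def by simp
    have "ineq a l f B (1 + e) (kap * J - (1 + 3 * B))"
      unfolding ineq_def J_def using core[OF a l l8 e1 H1[unfolded J_def] H2[unfolded J_def] H3[unfolded J_def] f0 B] by simp
    moreover have "J \<le> l + a / c0"
    proof -
      have "(m - l) * 1 \<le> (m - l) * h" using h1 d0 by (rule mult_left_mono)
      then have "(m - l) / h \<le> m - l" using h1 by (simp add: divide_le_eq)
      then have "J \<le> m - l" using j1 unfolding J_def by linarith
      then show ?thesis unfolding m_def using l by simp
    qed
    ultimately have "real j \<le> l + a / c0 \<and> ineq a l f B (1 + eta * real j / sqrt a) (kap * real j - (1 + 3 * B))"
      unfolding e_def J_def h_def by blast
    then show ?thesis by blast
  next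
    case False
    show ?thesis
    proof (cases "l \<le> 8 * m")
      case True
      have d0: "l - m \<ge> 0" using False by simp
      obtain j :: nat where j1: "real j \<le> (l - m) / h" and j2: "(l - m) / h < real j + 1"
        using floor_nat_exists[of "(l - m) / h"] d0 h1 by auto
      define J where "J = real j"
      have J0: "J \<ge> 0" unfolding J_def by simp
      have jh: "J * h \<le> l - m" using j1 h1 unfolding J_def by (simp add: le_divide_eq)
      have jh2: "l - m < (J + 1) * h" using j2 h1 unfolding J_def by (simp add: divide_less_eq)
      define e where "e = - (eta * J / h)"
      have e0: "eta * J / h \<ge> 0" using etap J0 h1 by simp
      have e1': "eta * J / h \<le> 1"
      proof -
        have "eta * J / h = eta * (J * h) / a" using hh h1 a by (simp add: field_simps)
        also have "\<dots> \<le> eta * (7 * m) / a" using jh d0 etap a True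
          by (intro divide_right_mono mult_left_mono) auto
        also have "\<dots> = 7 * (eta / c0)" unfolding m_def using a c0p by simp
        also have "\<dots> \<le> 1" using etac cb by linarith
        finally show ?thesis .
      qed
      have e1: "\<bar>e\<bar> \<le> 1" unfolding e_def using e0 e1' by simp
      have H1: "e * (a - c0 * l) \<ge> c0 * eta * J^2"
      proof -
        have am: "a - c0 * l = - (c0 * (l - m))" using cm by (simp add: algebra_simps)
        have "e * (a - c0 * l) = (c0 * eta * J / h) * (l - m)" unfolding e_def am using h1
          by (simp add: field_simps)
        also have "\<dots> \<ge> (c0 * eta * J / h) * (J * h)" using jh c0p etap J0 h1
          by (intro mult_left_mono) auto
        finally show ?thesis using h1 by (simp add: power2_eq_square)
      qed
      have H2: "e^2 \<le> eta^2 * J^2 / a" unfolding e_def using hh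
        by (simp add: power_divide power_mult_distrib power2_eq_square mult_ac)
      have ml: "max 1 l = l" using False m1 by simp
      have "(l - m)^2 \<le> ((J + 1) * h)^2" using jh2 d0 by (intro power_mono) auto
      also have "\<dots> = (J + 1)^2 * a" using hh by (simp add: power2_eq_square algebra_simps)
      finally have Q2: "(l - m)^2 / a \<le> (J + 1)^2" using a by (simp add: divide_le_eq)
      have H3: "f \<le> del * (J + 1)^2"
      proof -
        have "(max 1 l - m)^2 / a \<le> (J + 1)^2" using Q2 ml by simp
        then have "del * ((max 1 l - m)^2 / a) \<le> del * (J + 1)^2" using del_le by (intro mult_left_mono) auto
        then show ?thesis using fQ by linarith
      qed
      have l8: "l \<le> 8 * a / c0" using True unfolding m_def by simp
      have "ineq a l f B (1 + e) (kap * J - (1 + 3 * B))"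
        unfolding ineq_def J_def using core[OF a l l8 e1 H1[unfolded J_def] H2[unfolded J_def] H3[unfolded J_def] f0 B] by simp
      then have "ineq a l f B (1 - eta * J / h) (kap * J - (1 + 3 * B))" unfolding e_def by simp
      moreover have "J \<le> l + a / c0"
      proof -
        have "(l - m) * 1 \<le> (l - m) * h" using h1 d0 by (rule mult_left_mono)
        then have "(l - m) / h \<le> l - m" using h1 by (simp add: divide_le_eq)
        then have "J \<le> l - m" using j1 unfolding J_def by linarith
        moreover have "a / c0 \<ge> 0" using a c0p by simp
        ultimately show ?thesis unfolding m_def by linarith
      qed
      ultimately have "real j \<le> l + a / c0 \<and> eta * real j / sqrt a \<le> 1 \<and> ineq a l f B (1 - eta * real j / sqrt a) (kap * real j - (1 + 3 * B))"
        using e1' unfolding J_def h_def by blast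
      then show ?thesis by blast
    next
      case False': False
      obtain j :: nat where j1: "real j \<le> l" and j2: "l < real j + 1"
        using floor_nat_exists[of l] l by auto
      have ml: "max 1 l = l" using False m1 by simp
      have l8: "l \<ge> 8 * a / c0" using False' unfolding m_def by simp
      have "ineq a l f B (1/2) (real j / 25 - B)"
        using coreF[OF a l8 _ f0 B j1] fL ml by simp
      moreover have "real j \<le> l + a / c0"
      proof -
        have "a / c0 \<ge> 0" using a c0p by simp
        then show ?thesis using j1 by linarith
      qed
      ultimately show ?thesis by blast
    qed
  qed
qed

lemma prod_le_exp_sum:
  fixes w :: "nat \<Rightarrow> real"
  assumes "finite P" "\<forall>p\<in>P. w p \<ge> 0"
  shows "(\<Prod>p\<in>P. 1 + w p) \<le> exp (\<Sum>p\<in>P. w p)"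
proof -
  have "(\<Prod>p\<in>P. 1 + w p) \<le> (\<Prod>p\<in>P. exp (w p))"
    by (rule prod_mono) (use assms in \<open>auto intro: add_nonneg_nonneg\<close>)
  also have "\<dots> = exp (\<Sum>p\<in>P. w p)" using assms(1) by (simp add: exp_sum)
  finally show ?thesis .
qed

lemma Ecut_bound:
  fixes w :: "nat \<Rightarrow> real"
  assumes "finite P" "\<forall>p\<in>P. w p \<ge> 0" "t \<ge> 1"
  shows "Ecut P w t c \<le> exp ((t - 1) * (\<Sum>p\<in>{p\<in>P. p < c}. w p))"
proof -
  have fin: "finite {p\<in>P. p < c}" using assms(1) by simp
  have "Ecut P w t c \<le> (\<Prod>p\<in>{p\<in>P. p < c}. exp ((t - 1) * w p))"
    unfolding Ecut_def
  proof (rule prod_mono)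
    fix p assume "p \<in> {p\<in>P. p < c}"
    then have w: "w p \<ge> 0" using assms(2) by auto
    have pos: "1 + w p > 0" using w by simp
    have "0 \<le> (1 + t * w p) / (1 + w p)" using w assms(3) pos by simp
    moreover have "(1 + t * w p) / (1 + w p) \<le> 1 + (t - 1) * w p"
    proof -
      have e: "(1 + (t - 1) * w p) * (1 + w p) = 1 + t * w p + (t - 1) * (w p * w p)"
        by (simp add: algebra_simps)
      have "(t - 1) * (w p * w p) \<ge> 0" using w assms(3) by simp
      then have "(1 + t * w p) \<le> (1 + (t - 1) * w p) * (1 + w p)" using e by linarith
      then show ?thesis using pos by (simp add: divide_le_eq)
    qed
    moreover have "1 + (t - 1) * w p \<le> exp ((t - 1) * w p)" by simp
    ultimately show "0 \<le> (1 + t * w p) / (1 + w p) \<and> (1 + t * w p) / (1 + w p) \<le> exp ((t - 1) * w p)"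
      by linarith
  qed
  also have "\<dots> = exp (\<Sum>p\<in>{p\<in>P. p < c}. (t - 1) * w p)" using fin by (simp add: exp_sum)
  also have "\<dots> = exp ((t - 1) * (\<Sum>p\<in>{p\<in>P. p < c}. w p))" by (simp add: sum_distrib_left)
  finally show ?thesis .
qed

lemma sum_UN_le:
  fixes f :: "'a \<Rightarrow> real"
  assumes "finite I" "\<forall>i\<in>I. finite (X i)" "\<forall>i\<in>I. \<forall>x\<in>X i. f x \<ge> 0"
  shows "sum f (\<Union>i\<in>I. X i) \<le> (\<Sum>i\<in>I. sum f (X i))"
  using assms
proof (induction I rule: finite_induct)
  case empty then show ?case by simp
next
  case (insert i I)
  have fU: "finite (\<Union>i\<in>I. X i)" using insert by auto
  have fX: "finite (X i)" using insert by auto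
  have eq: "sum f (\<Union>i\<in>insert i I. X i) = sum f (X i) + sum f (\<Union>i\<in>I. X i) - sum f (X i \<inter> (\<Union>i\<in>I. X i))"
    using sum_Un[OF fX fU, of f] by simp
  have h1: "sum f (X i \<inter> (\<Union>i\<in>I. X i)) \<ge> 0" using insert.prems by (intro sum_nonneg) auto
  have h2: "sum f (\<Union>i\<in>I. X i) \<le> (\<Sum>i\<in>I. sum f (X i))" using insert by auto
  have h3: "(\<Sum>i\<in>insert i I. sum f (X i)) = sum f (X i) + (\<Sum>i\<in>I. sum f (X i))" using insert.hyps by simp
  show ?case using eq h1 h2 h3 by linarith
qed

lemma geom_le:
  fixes r :: real assumes "0 \<le> r" "r < 1"
  shows "(\<Sum>i<n. r^i) \<le> 1 / (1 - r)"
proof -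
  have "(\<Sum>i<n. r^i) = (1 - r^n) / (1 - r)" using sum_gp_strict[of r n] assms by simp
  also have "\<dots> \<le> 1 / (1 - r)" using assms by (intro divide_right_mono) auto
  finally show ?thesis .
qed

lemma Logm_mono: "1 \<le> y \<Longrightarrow> y \<le> x \<Longrightarrow> Logm y \<le> Logm x"
  unfolding Logm_def by (simp add: max.coboundedI2)

lemma nat_ceil_less: "(p < nat \<lceil>y\<rceil>) = (real p < y)"
  by (simp add: zless_nat_eq_int_zless less_ceiling_iff)

lemma bad_to_doob:
  fixes S :: "nat set" and y x A a f s g :: real
  assumes S: "S \<subseteq> PP x" and y: "1 \<le> y" "y \<le> x" and A: "A = exp a" and s: "s \<ge> 0"
    and I: "ineq a (ln (Logm y)) f 6 s g"
    and gt: "real (2 ^ card {p\<in>S. real p < y}) > A * exp (- f) * Logm y"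
  shows "S \<in> badset (PP x) (\<lambda>p. 1 / real p) (2 powr s) (exp (a + g))"
proof -
  define l where "l = ln (Logm y)"
  define k where "k = card {p\<in>S. real p < y}"
  define t where "t = 2 powr s"
  define c where "c = nat \<lceil>y\<rceil>"
  have Lp: "Logm y > 0" unfolding Logm_def by simp
  have t1: "t \<ge> 1" unfolding t_def using s by (simp add: ge_one_powr_ge_zero)
  have cset: "{p\<in>S. p < c} = {p\<in>S. real p < y}" unfolding c_def nat_ceil_less by simp
  have Pset: "{p\<in>PP x. p < c} = {p. prime p \<and> real p < y}"
    unfolding c_def PP_def nat_ceil_less using y by auto
  have finP: "finite (PP x)" by (rule finite_PP)
  have wpos: "\<forall>p\<in>PP x. 1 / real p \<ge> 0" by simp
  have E: "Ecut (PP x) (\<lambda>p. 1 / real p) t c \<le> exp ((t - 1) * (l + 6))"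
  proof -
    have "Ecut (PP x) (\<lambda>p. 1 / real p) t c \<le> exp ((t - 1) * (\<Sum>p\<in>{p\<in>PP x. p < c}. 1 / real p))"
      by (rule Ecut_bound[OF finP wpos t1])
    also have "(\<Sum>p\<in>{p\<in>PP x. p < c}. 1 / real p) \<le> l + 6"
      unfolding Pset l_def by (rule mertens_real)
    then have "exp ((t - 1) * (\<Sum>p\<in>{p\<in>PP x. p < c}. 1 / real p)) \<le> exp ((t - 1) * (l + 6))"
      using t1 by (simp add: mult_left_mono)
    finally show ?thesis .
  qed
  define T where "T = A * exp (- f) * Logm y"
  have Tp: "T > 0" unfolding T_def A using Lp by simp
  have lnT: "ln T = a - f + l" unfolding T_def A l_def using Lp by (simp add: ln_mult)
  have "t ^ k = (2 powr s) ^ k" unfolding t_def ..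
  also have "\<dots> = (2 powr s) powr real k" by (simp add: powr_realpow)
  also have "\<dots> = 2 powr (s * real k)" by (simp add: powr_powr)
  also have "\<dots> = (2 powr real k) powr s" by (simp add: powr_powr mult.commute)
  also have "\<dots> = (2 ^ k) powr s" by (simp add: powr_realpow)
  also have "\<dots> \<ge> T powr s" using gt Tp s unfolding T_def k_def by (intro powr_mono2) auto
  finally have tk: "t ^ k \<ge> T powr s" .
  have "T powr s = exp (s * (a - f + l))" using Tp lnT by (simp add: powr_def mult.commute)
  also have "\<dots> \<ge> exp (a + g + (t - 1) * (l + 6))"
    using I unfolding ineq_def t_def l_def by simp
  also have "exp (a + g + (t - 1) * (l + 6)) = exp (a + g) * exp ((t - 1) * (l + 6))"
    by (simp add: exp_add)
  also have "\<dots> \<ge> exp (a + g) * Ecut (PP x) (\<lambda>p. 1 / real p) t c"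
    using E by (intro mult_left_mono) auto
  finally have "t ^ k \<ge> exp (a + g) * Ecut (PP x) (\<lambda>p. 1 / real p) t c" using tk by linarith
  then have "t ^ card {p\<in>S. p < c} \<ge> exp (a + g) * Ecut (PP x) (\<lambda>p. 1 / real p) t c"
    unfolding cset k_def .
  then show ?thesis unfolding badset_def t_def using S by auto
qed

lemma sum_Un_le2:
  fixes f :: "'a \<Rightarrow> real"
  assumes "finite A" "finite B" "\<forall>x\<in>A \<union> B. f x \<ge> 0"
  shows "sum f (A \<union> B) \<le> sum f A + sum f B"
proof -
  have "sum f (A \<union> B) = sum f A + sum f B - sum f (A \<inter> B)" by (rule sum_Un[OF assms(1,2)])
  moreover have "sum f (A \<inter> B) \<ge> 0" using assms(3) by (intro sum_nonneg) auto
  ultimately show ?thesis by linarith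
qed

definition Kc :: real where
  "Kc = 2 * exp 19 / (1 - exp (- kap)) + exp 6 / (1 - exp (- 1/25))"

lemma kap_pos: "kap > 0" unfolding kap_def using c0_pos by simp

lemma sumbound: "(\<Sum>j<N. 2 * exp (- (kap * real j - (1 + 3 * 6))) + exp (- (real j / 25 - 6))) \<le> Kc"
proof -
  have e1: "exp (- (kap * real j - (1 + 3 * 6))) = exp 19 * exp (- kap) ^ j" for j
  proof -
    have "exp (- (kap * real j - (1 + 3 * 6))) = exp (19 + real j * (- kap))" by (simp add: algebra_simps)
    also have "\<dots> = exp 19 * exp (real j * (- kap))" by (rule exp_add)
    also have "\<dots> = exp 19 * exp (- kap) ^ j" by (simp only: exp_of_nat_mult)
    finally show ?thesis .
  qed
  have e2: "exp (- (real j / 25 - 6)) = exp 6 * exp (- 1/25) ^ j" for j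
  proof -
    have "exp (- (real j / 25 - 6)) = exp (6 + real j * (- 1/25))" by (simp add: algebra_simps)
    also have "\<dots> = exp 6 * exp (real j * (- 1/25))" by (rule exp_add)
    also have "\<dots> = exp 6 * exp (- 1/25) ^ j" by (simp only: exp_of_nat_mult)
    finally show ?thesis .
  qed
  have r1: "exp (- kap) < 1" "0 \<le> exp (- kap)" using kap_pos by auto
  have r2: "exp (- 1/25::real) < 1" "0 \<le> exp (- 1/25::real)" by auto
  have "(\<Sum>j<N. 2 * exp (- (kap * real j - (1 + 3 * 6))) + exp (- (real j / 25 - 6)))
      = 2 * exp 19 * (\<Sum>j<N. exp (- kap) ^ j) + exp 6 * (\<Sum>j<N. exp (- 1/25) ^ j)"
    unfolding e1 e2 by (simp add: sum.distrib sum_distrib_left mult.assoc)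
  also have "\<dots> \<le> 2 * exp 19 * (1 / (1 - exp (- kap))) + exp 6 * (1 / (1 - exp (- 1/25)))"
    using geom_le[OF r1(2) r1(1), of N] geom_le[OF r2(2) r2(1), of N]
    by (intro add_mono mult_left_mono) auto
  also have "\<dots> = Kc" unfolding Kc_def by simp
  finally show ?thesis .
qed

lemma Kc_nonneg: "Kc \<ge> 0"
proof -
  have "exp (- kap) < 1" using kap_pos by simp
  moreover have "exp (- 1/25::real) < 1" by simp
  ultimately show ?thesis unfolding Kc_def by (intro add_nonneg_nonneg divide_nonneg_pos) auto
qed

lemma sum_transfer:
  "(\<Sum>n\<in>S_lt x - SA_lt d A x. 1 / real n) =
   (\<Sum>S\<in>{S\<in>Pow (PP x). \<Prod>S \<notin> SA_lt d A x}. \<Prod>p\<in>S. 1 / real p)"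
proof -
  have bij: "bij_betw (\<lambda>S. \<Prod>S) (Pow (PP x)) (S_lt x)" by (rule bij_S_lt)
  have inj: "inj_on (\<lambda>S. \<Prod>S) {S\<in>Pow (PP x). \<Prod>S \<notin> SA_lt d A x}"
    using bij_betw_imp_inj_on[OF bij] by (rule inj_on_subset) auto
  have img: "S_lt x - SA_lt d A x = (\<lambda>S. \<Prod>S) ` {S\<in>Pow (PP x). \<Prod>S \<notin> SA_lt d A x}"
    using bij_betw_imp_surj_on[OF bij] by auto
  have "(\<Sum>n\<in>S_lt x - SA_lt d A x. 1 / real n) = (\<Sum>S\<in>{S\<in>Pow (PP x). \<Prod>S \<notin> SA_lt d A x}. 1 / real (\<Prod>S))"
    unfolding img by (subst sum.reindex[OF inj]) simp
  also have "\<dots> = (\<Sum>S\<in>{S\<in>Pow (PP x). \<Prod>S \<notin> SA_lt d A x}. \<Prod>p\<in>S. 1 / real p)"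
    by (rule sum.cong) (simp_all add: prod_dividef)
  finally show ?thesis .
qed

lemma W_bound: "(\<Prod>p\<in>PP x. 1 + 1 / real p) \<le> exp 6 * Logm x"
proof -
  have "(\<Prod>p\<in>PP x. 1 + 1 / real p) \<le> exp (\<Sum>p\<in>PP x. 1 / real p)"
    by (rule prod_le_exp_sum) (auto simp: finite_PP)
  also have "\<dots> \<le> exp (ln (Logm x) + 6)" using mertens_real[of x] unfolding PP_def by simp
  also have "\<dots> = exp 6 * Logm x" using exp_add[of "ln (Logm x)" 6] unfolding Logm_def by simp
  finally show ?thesis .
qed

lemma doob_W:
  assumes "t > 0" "a + g = ga"
  shows "(\<Sum>S\<in>badset (PP x) (\<lambda>p. 1 / real p) t (exp ga). \<Prod>p\<in>S. 1 / real p)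
          \<le> (\<Prod>p\<in>PP x. 1 + 1 / real p) / exp a * exp (- g)"
proof -
  have wp: "\<forall>p\<in>PP x. (1::real) / real p > 0" unfolding PP_def using prime_gt_0_nat by auto
  have "(\<Sum>S\<in>badset (PP x) (\<lambda>p. 1 / real p) t (exp ga). \<Prod>p\<in>S. 1 / real p)
        \<le> (\<Prod>p\<in>PP x. 1 + 1 / real p) / exp ga"
    by (rule doob[OF finite_PP wp assms(1)]) simp
  also have "\<dots> = (\<Prod>p\<in>PP x. 1 + 1 / real p) / exp a * exp (- g)"
    unfolding assms(2)[symmetric] by (simp add: exp_add exp_minus field_simps)
  finally show ?thesis .
qed

lemma main_big:
  assumes A: "A \<ge> exp 1" and x: "x > 1"
  shows "(\<Sum>S\<in>{S\<in>Pow (PP x). \<Prod>S \<notin> SA_lt del A x}. \<Prod>p\<in>S. 1 / real p)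
          \<le> (\<Prod>p\<in>PP x. 1 + 1 / real p) / A * Kc"
proof -
  define a where "a = ln A"
  have Apos: "A > 0" using A by (smt (verit) exp_gt_zero)
  have a1: "a \<ge> 1" unfolding a_def using A Apos by (metis ln_exp ln_le_cancel_iff exp_gt_zero)
  have Aa: "A = exp a" unfolding a_def using Apos by simp
  have LA: "Logm A = a" unfolding Logm_def a_def using a1 a_def by simp
  define w :: "nat \<Rightarrow> real" where "w = (\<lambda>p. 1 / real p)"
  define W where "W = (\<Prod>p\<in>PP x. 1 + 1 / real p)"
  define Bad where "Bad = {S\<in>Pow (PP x). \<Prod>S \<notin> SA_lt del A x}"
  define N where "N = nat \<lceil>ln (Logm x) + a / c0\<rceil> + 1"
  define g1 where "g1 = (\<lambda>j::nat. kap * real j - (1 + 3 * 6))"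
  define g3 where "g3 = (\<lambda>j::nat. real j / 25 - 6)"
  define X1 where "X1 = (\<lambda>j::nat. badset (PP x) w (2 powr (1 - eta * real j / sqrt a)) (exp (a + g1 j)))"
  define X2 where "X2 = (\<lambda>j::nat. badset (PP x) w (2 powr (1 + eta * real j / sqrt a)) (exp (a + g1 j)))"
  define X3 where "X3 = (\<lambda>j::nat. badset (PP x) w (2 powr (1/2)) (exp (a + g3 j)))"
  define X where "X = (\<lambda>j. X1 j \<union> X2 j \<union> X3 j)"
  have cover: "Bad \<subseteq> (\<Union>j\<in>{..<N}. X j)"
  proof
    fix S assume "S \<in> Bad"
    then have SP: "S \<subseteq> PP x" and nSA: "\<Prod>S \<notin> SA_lt del A x" unfolding Bad_def by auto
    have fS: "finite S" using SP finite_PP finite_subset by blast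
    have pS: "\<forall>p\<in>S. prime p" using SP unfolding PP_def by auto
    have inS: "\<Prod>S \<in> S_lt x" using bij_betw_imp_surj_on[OF bij_S_lt[of x]] SP by auto
    obtain y where y: "1 \<le> y" "y \<le> x"
      and ny: "\<not> real (tau (part_lt (\<Prod>S) y)) \<le> A * exp (- fA del A y) * Logm y"
      using nSA inS unfolding SA_lt_def by auto
    have fS2: "finite {p\<in>S. real p < y}" using fS by simp
    have pS2: "\<forall>p\<in>{p\<in>S. real p < y}. prime p" using pS by simp
    have tau: "tau (part_lt (\<Prod>S) y) = 2 ^ card {p\<in>S. real p < y}"
      unfolding part_lt_prod[OF fS pS] using tau_prod_primes[OF fS2 pS2] .
    have gt: "real (2 ^ card {p\<in>S. real p < y}) > A * exp (- fA del A y) * Logm y"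
      using ny unfolding tau by simp
    define l where "l = ln (Logm y)"
    have LL: "Logm y \<ge> 1" unfolding Logm_def by simp
    have l0: "l \<ge> 0" unfolding l_def using LL by simp
    have lx: "l \<le> ln (Logm x)" unfolding l_def using Logm_mono[OF y] LL by simp
    have L2: "Log2 y = max 1 l" unfolding Log2_def l_def Logm_def[of "Logm y"] ..
    have fdef: "fA del A y = del * min ((max 1 l - a / c0)^2 / a) (a + max 1 l)"
      unfolding fA_def L2 LA c0_def ..
    have f0: "fA del A y \<ge> 0" unfolding fdef using del_le a1 by (intro mult_nonneg_nonneg) auto
    obtain j :: nat where jb: "real j \<le> l + a / c0" and cases:
      "(eta * real j / sqrt a \<le> 1 \<and> ineq a l (fA del A y) 6 (1 - eta * real j / sqrt a) (kap * real j - (1 + 3 * 6))) \<or>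
       ineq a l (fA del A y) 6 (1 + eta * real j / sqrt a) (kap * real j - (1 + 3 * 6)) \<or>
       ineq a l (fA del A y) 6 (1/2) (real j / 25 - 6)"
      using key[OF a1 l0 _ f0, of 6] fdef by auto
    have jN: "j \<in> {..<N}"
    proof -
      have "real j \<le> ln (Logm x) + a / c0" using jb lx by linarith
      then have "real j \<le> real_of_int \<lceil>ln (Logm x) + a / c0\<rceil>" by linarith
      then have "int j \<le> \<lceil>ln (Logm x) + a / c0\<rceil>" by (metis of_int_le_iff of_int_of_nat_eq)
      then have "j \<le> nat \<lceil>ln (Logm x) + a / c0\<rceil>" by (simp add: le_nat_iff)
      then show ?thesis unfolding N_def by simp
    qed
    have ep: "eta * real j / sqrt a \<ge> 0" using c0_pos a1 unfolding eta_def by simp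
    have "S \<in> X j"
    proof -
      { assume c1: "eta * real j / sqrt a \<le> 1" "ineq a l (fA del A y) 6 (1 - eta * real j / sqrt a) (kap * real j - (1 + 3 * 6))"
        have "S \<in> X1 j" unfolding X1_def w_def g1_def
          using bad_to_doob[OF SP y Aa _ c1(2)[unfolded l_def] gt] c1(1) by simp }
      moreover
      { assume c2: "ineq a l (fA del A y) 6 (1 + eta * real j / sqrt a) (kap * real j - (1 + 3 * 6))"
        have "S \<in> X2 j" unfolding X2_def w_def g1_def
          using bad_to_doob[OF SP y Aa _ c2[unfolded l_def] gt] ep by simp }
      moreover
      { assume c3: "ineq a l (fA del A y) 6 (1/2) (real j / 25 - 6)"
        have "S \<in> X3 j" unfolding X3_def w_def g3_def
          using bad_to_doob[OF SP y Aa _ c3[unfolded l_def] gt] by simp }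
      ultimately show ?thesis using cases unfolding X_def by blast
    qed
    then show "S \<in> (\<Union>j\<in>{..<N}. X j)" using jN by blast
  qed
  have subP: "\<And>j. X j \<subseteq> Pow (PP x)" unfolding X_def X1_def X2_def X3_def badset_def by auto
  have finX: "\<And>j. finite (X j)" using subP finite_PP by (meson finite_Pow_iff finite_subset)
  have nonneg: "\<And>S. 0 \<le> (\<Prod>p\<in>S. 1 / real p)" by (intro prod_nonneg) auto
  have "(\<Sum>S\<in>Bad. \<Prod>p\<in>S. 1 / real p) \<le> (\<Sum>S\<in>(\<Union>j\<in>{..<N}. X j). \<Prod>p\<in>S. 1 / real p)"
  proof (rule sum_mono2)
    show "finite (\<Union>j\<in>{..<N}. X j)" using finX by auto
    show "Bad \<subseteq> (\<Union>j\<in>{..<N}. X j)" by (rule cover)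
    fix S assume "S \<in> (\<Union>j\<in>{..<N}. X j) - Bad"
    then show "0 \<le> (\<Prod>p\<in>S. 1 / real p)" using subP nonneg by blast
  qed
  also have "\<dots> \<le> (\<Sum>j<N. \<Sum>S\<in>X j. \<Prod>p\<in>S. 1 / real p)"
    by (rule sum_UN_le) (use finX subP nonneg in auto)
  also have "\<dots> \<le> (\<Sum>j<N. W / A * (2 * exp (- g1 j) + exp (- g3 j)))"
  proof (rule sum_mono)
    fix j
    have f1: "finite (X1 j)" "finite (X2 j)" "finite (X3 j)" using finX unfolding X_def by auto
    have s1: "(\<Sum>S\<in>X1 j. \<Prod>p\<in>S. 1 / real p) \<le> W / A * exp (- g1 j)"
      unfolding X1_def w_def W_def Aa by (rule doob_W) auto
    have s2: "(\<Sum>S\<in>X2 j. \<Prod>p\<in>S. 1 / real p) \<le> W / A * exp (- g1 j)"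
      unfolding X2_def w_def W_def Aa by (rule doob_W) auto
    have s3: "(\<Sum>S\<in>X3 j. \<Prod>p\<in>S. 1 / real p) \<le> W / A * exp (- g3 j)"
      unfolding X3_def w_def W_def Aa by (rule doob_W) auto
    have "(\<Sum>S\<in>X j. \<Prod>p\<in>S. 1 / real p) \<le> (\<Sum>S\<in>X1 j \<union> X2 j. \<Prod>p\<in>S. 1 / real p) + (\<Sum>S\<in>X3 j. \<Prod>p\<in>S. 1 / real p)"
      unfolding X_def by (rule sum_Un_le2) (use f1 subP nonneg in \<open>auto simp: X_def\<close>)
    also have "(\<Sum>S\<in>X1 j \<union> X2 j. \<Prod>p\<in>S. 1 / real p) \<le> (\<Sum>S\<in>X1 j. \<Prod>p\<in>S. 1 / real p) + (\<Sum>S\<in>X2 j. \<Prod>p\<in>S. 1 / real p)"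
      by (rule sum_Un_le2) (use f1 subP nonneg in \<open>auto simp: X_def\<close>)
    finally have F: "(\<Sum>S\<in>X j. \<Prod>p\<in>S. 1 / real p) \<le> (\<Sum>S\<in>X1 j. \<Prod>p\<in>S. 1 / real p) + (\<Sum>S\<in>X2 j. \<Prod>p\<in>S. 1 / real p) + (\<Sum>S\<in>X3 j. \<Prod>p\<in>S. 1 / real p)"
      by simp
    have eq: "W / A * (2 * exp (- g1 j) + exp (- g3 j)) = W / A * exp (- g1 j) + W / A * exp (- g1 j) + W / A * exp (- g3 j)"
      by (simp add: algebra_simps)
    show "(\<Sum>S\<in>X j. \<Prod>p\<in>S. 1 / real p) \<le> W / A * (2 * exp (- g1 j) + exp (- g3 j))"
      using F s1 s2 s3 eq by linarith
  qed
  also have "\<dots> = W / A * (\<Sum>j<N. 2 * exp (- (kap * real j - (1 + 3 * 6))) + exp (- (real j / 25 - 6)))"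
    unfolding g1_def g3_def by (simp add: sum_distrib_left)
  also have "\<dots> \<le> W / A * Kc"
  proof (rule mult_left_mono)
    show "(\<Sum>j<N. 2 * exp (- (kap * real j - (1 + 3 * 6))) + exp (- (real j / 25 - 6))) \<le> Kc" by (rule sumbound)
    have "W \<ge> 0" unfolding W_def by (intro prod_nonneg) (auto intro: add_nonneg_nonneg)
    then show "0 \<le> W / A" using Apos by simp
  qed
  finally show ?thesis unfolding Bad_def W_def .
qed

theorem proposition5p1:
  shows "\<exists>\<delta>::real. \<delta> > 0 \<and> (\<exists>C::real. \<forall>A x. A \<ge> 1 \<longrightarrow> x > 1 \<longrightarrow>
     (\<Sum>n\<in>S_lt x - SA_lt \<delta> A x. 1 / real n) \<le> C * Logm x / A)"
proof -
  define C where "C = exp 6 * (exp 1 + Kc)"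
  have main: "\<forall>A x. A \<ge> 1 \<longrightarrow> x > 1 \<longrightarrow> (\<Sum>n\<in>S_lt x - SA_lt del A x. 1 / real n) \<le> C * Logm x / A"
  proof (intro allI impI)
    fix A x :: real assume A1: "A \<ge> 1" and x: "x > 1"
    define W where "W = (\<Prod>p\<in>PP x. 1 + 1 / real p)"
    have W6: "W \<le> exp 6 * Logm x" unfolding W_def by (rule W_bound)
    have Lx: "Logm x > 0" unfolding Logm_def by simp
    have Ap: "A > 0" using A1 by simp
    have K0: "Kc \<ge> 0" by (rule Kc_nonneg)
    have E: "exp 6 * Logm x \<ge> 0" using Lx by simp
    have eq: "(\<Sum>n\<in>S_lt x - SA_lt del A x. 1 / real n) =
      (\<Sum>S\<in>{S\<in>Pow (PP x). \<Prod>S \<notin> SA_lt del A x}. \<Prod>p\<in>S. 1 / real p)" by (rule sum_transfer)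
    show "(\<Sum>n\<in>S_lt x - SA_lt del A x. 1 / real n) \<le> C * Logm x / A"
    proof (cases "A < exp 1")
      case True
      have wp: "\<forall>p\<in>PP x. (1::real) / real p > 0" unfolding PP_def using prime_gt_0_nat by auto
      have "(\<Sum>S\<in>{S\<in>Pow (PP x). \<Prod>S \<notin> SA_lt del A x}. \<Prod>p\<in>S. 1 / real p) \<le> W"
        unfolding W_def by (rule sum_sub_Pow_le[OF finite_PP wp]) auto
      also have "\<dots> \<le> exp 6 * Logm x" by (rule W6)
      also have "\<dots> \<le> C * Logm x / A"
      proof -
        have "A \<le> exp 1 + Kc" using True K0 by simp
        then have "(exp 6 * Logm x) * A \<le> (exp 6 * Logm x) * (exp 1 + Kc)" using E by (rule mult_left_mono)
        then have "(exp 6 * Logm x) * A \<le> C * Logm x" unfolding C_def by (simp add: algebra_simps)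
        then show ?thesis using Ap by (simp add: pos_le_divide_eq)
      qed
      finally show ?thesis using eq by simp
    next
      case False
      then have Ae: "A \<ge> exp 1" by simp
      have "(\<Sum>S\<in>{S\<in>Pow (PP x). \<Prod>S \<notin> SA_lt del A x}. \<Prod>p\<in>S. 1 / real p) \<le> W / A * Kc"
        unfolding W_def by (rule main_big[OF Ae x])
      also have "\<dots> = W * Kc / A" by simp
      also have "\<dots> \<le> (exp 6 * Logm x) * Kc / A"
        using W6 K0 Ap by (intro divide_right_mono mult_right_mono) auto
      also have "\<dots> \<le> C * Logm x / A"
      proof -
        have "(exp 6 * Logm x) * Kc \<le> (exp 6 * Logm x) * (exp 1 + Kc)" using E by (intro mult_left_mono) auto
        then have "(exp 6 * Logm x) * Kc \<le> C * Logm x" unfolding C_def by (simp add: algebra_simps)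
        then show ?thesis using Ap by (intro divide_right_mono) auto
      qed
      finally show ?thesis using eq by simp
    qed
  qed
  show ?thesis using main del_le(2) by blast
qed

end
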